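(* Let $(X,* )$ be an associative shelf, let $C_n=\mathbb{Z}X^{n+1}$ for $n\ge 0$ (and $C_n=0$ for $n<0$), and let $d_i:C_n\to C_{n-1}$, $0\le i\le n$, be given on basis elements by $$d_i(x_0,\dots,x_n)=\begin{cases}(x_0*x_1,x_2,\dots,x_{n-1},x_n*x_0) & i=0,\\ (x_n*x_0,x_1,\dots,x_{n-2},x_{n-1}*x_n) & i=n,\\ (x_0,\dots,x_{i-2},x_{i-1}*x_i,x_i*x_{i+1},x_{i+2},\dots,x_n) & 0<i<n\end{cases}$$ (for $n=1$: $d_0(x_0,x_1)=x_0*x_1*x_0$, $d_1(x_0,x_1)=x_1*x_0*x_1$). Define $\partial_n=\sum_{i=0}^n(-1)^i d_i:C_n\to C_{n-1}$. Then $(C_n,\partial_n)$ is a chain complex, i.e. $\partial_n\circ\partial_{n+1}=0$ for all $n$.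
   Context: A shelf is a set $X$ with a binary operation $*$ satisfying $(a*b)*c=(a*c)*(b*c)$ for all $a,b,c\in X$; an associative shelf is a shelf whose operation is associative. *)

theory Defs
  imports "HOL-Library.Poly_Mapping"
begin

definition shelf :: "('a \<Rightarrow> 'a \<Rightarrow> 'a) \<Rightarrow> bool" where
  "shelf f \<longleftrightarrow> (\<forall>a b c. f (f a b) c = f (f a c) (f b c))"

definition assoc_shelf :: "('a \<Rightarrow> 'a \<Rightarrow> 'a) \<Rightarrow> bool" where
  "assoc_shelf f \<longleftrightarrow> shelf f \<and> (\<forall>a b c. f (f a b) c = f a (f b c))"

text \<open>Basis elements of C_n are tuples (x_0,...,x_n), i.e. lists of length n+1.
  Face map d_i on a tuple of length n+1 (n = length xs - 1).\<close>
definition face :: "('a \<Rightarrow> 'a \<Rightarrow> 'a) \<Rightarrow> nat \<Rightarrow> 'a list \<Rightarrow> 'a list" where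
  "face f i xs = (let n = length xs - 1 in
     if n = 1 then
       (if i = 0 then [f (f (xs!0) (xs!1)) (xs!0)] else [f (f (xs!1) (xs!0)) (xs!1)])
     else if i = 0 then
       f (xs!0) (xs!1) # drop 2 (take n xs) @ [f (xs!n) (xs!0)]
     else if i = n then
       f (xs!n) (xs!0) # take (n - 2) (drop 1 xs) @ [f (xs!(n-1)) (xs!n)]
     else
       take (i - 1) xs @ [f (xs!(i-1)) (xs!i), f (xs!i) (xs!(i+1))] @ drop (i + 2) xs)"

definition chains :: "nat \<Rightarrow> ('a list \<Rightarrow>\<^sub>0 int) set" where
  "chains n = {c. \<forall>xs\<in>Poly_Mapping.keys c. length xs = Suc n}"

text \<open>Boundary on a basis element: \<partial>_n = \<Sum>_{i=0}^n (-1)^i d_i, and \<partial>_0 = 0 (C_{-1} = 0).\<close>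
definition bd_basis :: "('a \<Rightarrow> 'a \<Rightarrow> 'a) \<Rightarrow> 'a list \<Rightarrow> ('a list \<Rightarrow>\<^sub>0 int)" where
  "bd_basis f xs = (if length xs \<le> 1 then 0
     else (\<Sum>i\<in>{0..length xs - 1}. Poly_Mapping.single (face f i xs) ((-1) ^ i)))"

definition bd :: "('a \<Rightarrow> 'a \<Rightarrow> 'a) \<Rightarrow> ('a list \<Rightarrow>\<^sub>0 int) \<Rightarrow> ('a list \<Rightarrow>\<^sub>0 int)" where
  "bd f c = (\<Sum>xs\<in>Poly_Mapping.keys c. Poly_Mapping.map (\<lambda>k. Poly_Mapping.lookup c xs * k) (bd_basis f xs))"

end

theory Submission
  imports Defs
begin

lemma face_len1: "length xs = 2 \<Longrightarrow> length (face f i xs) = 1"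
  by (simp add: face_def)

lemma face_len:
  assumes "length xs = Suc m" "2 \<le> m" "i \<le> m"
  shows "length (face f i xs) = m"
  using assms by (auto simp: face_def Let_def)

lemma face_nth0:
  assumes "length xs = Suc m" "2 \<le> m" "k < m"
  shows "face f 0 xs ! k = (if k = 0 then f (xs!0) (xs!1) else if k = m-1 then f (xs!m) (xs!0) else xs!(k+1))"
proof -
  have e: "face f 0 xs = f (xs!0) (xs!1) # drop 2 (take m xs) @ [f (xs!m) (xs!0)]"
    using assms by (simp add: face_def Let_def)
  have l: "length (drop 2 (take m xs)) = m - 2" using assms by simp
  consider "k = 0" | "k = m - 1" | "0 < k" "k < m - 1" using assms by linarith
  then show ?thesis
  proof cases
    case 1 then show ?thesis by (simp add: e)
  next
    case 2
    then have "k = Suc (m - 2)" using assms by simp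
    then show ?thesis using e l assms by (auto simp: nth_append)
  next
    case 3
    then obtain k' where k': "k = Suc k'" "k' < m - 2" by (cases k) auto
    then show ?thesis using e l assms 3 by (auto simp: nth_append)
  qed
qed

lemma face_nthm:
  assumes "length xs = Suc m" "2 \<le> m" "k < m"
  shows "face f m xs ! k = (if k = 0 then f (xs!m) (xs!0) else if k = m-1 then f (xs!(m-1)) (xs!m) else xs!k)"
proof -
  have e: "face f m xs = f (xs!m) (xs!0) # take (m - 2) (drop 1 xs) @ [f (xs!(m-1)) (xs!m)]"
    using assms by (simp add: face_def Let_def)
  have l: "length (take (m - 2) (drop 1 xs)) = m - 2" using assms by simp
  consider "k = 0" | "k = m - 1" | "0 < k" "k < m - 1" using assms by linarith
  then show ?thesis
  proof cases
    case 1 then show ?thesis using assms by (simp add: e)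
  next
    case 2
    then have "k = Suc (m - 2)" using assms by simp
    then show ?thesis using e l assms by (auto simp: nth_append)
  next
    case 3
    then obtain k' where k': "k = Suc k'" "k' < m - 2" by (cases k) auto
    then show ?thesis using e l assms 3 by (auto simp: nth_append)
  qed
qed

lemma face_nthi:
  assumes "length xs = Suc m" "2 \<le> m" "k < m" "0 < i" "i < m"
  shows "face f i xs ! k = (if k < i-1 then xs!k else if k = i-1 then f (xs!(i-1)) (xs!i) else if k = i then f (xs!i) (xs!(i+1)) else xs!(k+1))"
proof -
  have e: "face f i xs = take (i - 1) xs @ [f (xs!(i-1)) (xs!i), f (xs!i) (xs!(i+1))] @ drop (i + 2) xs"
    using assms by (simp add: face_def Let_def)
  have l: "length (take (i - 1) xs) = i - 1" using assms by simp
  consider "k < i - 1" | "k = i - 1" | "k = i" | "i < k" by linarith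
  then show ?thesis
  proof cases
    case 1 then show ?thesis using e l by (simp add: nth_append)
  next
    case 2 then show ?thesis using e l by (simp add: nth_append)
  next
    case 3 then have "k = Suc (i - 1)" using assms by simp
    then show ?thesis using e l assms 3 by (auto simp: nth_append)
  next
    case 4 then obtain d where d: "k = Suc i + d" using less_imp_Suc_add by blast
    have "(take (i - 1) xs @ [f (xs!(i-1)) (xs!i), f (xs!i) (xs!(i+1))] @ drop (i + 2) xs) ! k
       = ([f (xs!(i-1)) (xs!i), f (xs!i) (xs!(i+1))] @ drop (i + 2) xs) ! (Suc (Suc d))"
      using l d assms(4) by (auto simp: nth_append)
    also have "\<dots> = xs ! (k+1)" using d assms by simp
    finally show ?thesis using e 4 by auto
  qed
qed

lemma face_nth:
  assumes "length xs = Suc m" "2 \<le> m" "i \<le> m" "k < m"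
  shows "face f i xs ! k = (if i = 0 then (if k = 0 then f (xs!0) (xs!1) else if k = m-1 then f (xs!m) (xs!0) else xs!(k+1))
 else if i = m then (if k = 0 then f (xs!m) (xs!0) else if k = m-1 then f (xs!(m-1)) (xs!m) else xs!k)
 else (if k < i-1 then xs!k else if k = i-1 then f (xs!(i-1)) (xs!i) else if k = i then f (xs!i) (xs!(i+1)) else xs!(k+1)))"
  using assms face_nth0[OF assms(1,2,4)] face_nthm[OF assms(1,2,4)] face_nthi[OF assms(1,2,4)] by auto

lemma K:
  assumes "assoc_shelf f"
  shows "f x (f y (f y z)) = f x (f y z)" "f (f a b) c = f a (f b c)"
proof -
  have sh: "\<And>a b c. f (f a b) c = f (f a c) (f b c)" and as: "\<And>a b c. f (f a b) c = f a (f b c)"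
    using assms by (auto simp: assoc_shelf_def shelf_def)
  show "f x (f y (f y z)) = f x (f y z)" by (metis as sh)
  show "f (f a b) c = f a (f b c)" by (rule as)
qed

lemma n0: "length xs = Suc (Suc (Suc q)) \<Longrightarrow> k < Suc (Suc q) \<Longrightarrow>
  face f 0 xs ! k = (if k = 0 then f (xs!0) (xs!1) else if k = Suc q then f (xs!Suc (Suc q)) (xs!0) else xs!Suc k)"
  using face_nth0[of xs "Suc (Suc q)" k f] by simp

lemma nm: "length xs = Suc (Suc (Suc q)) \<Longrightarrow> k < Suc (Suc q) \<Longrightarrow>
  face f (Suc (Suc q)) xs ! k = (if k = 0 then f (xs!Suc (Suc q)) (xs!0) else if k = Suc q then f (xs!Suc q) (xs!Suc (Suc q)) else xs!k)"
  using face_nthm[of xs "Suc (Suc q)" k f] by simp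

lemma ni: "length xs = Suc (Suc (Suc q)) \<Longrightarrow> k < Suc (Suc q) \<Longrightarrow> i' < Suc q \<Longrightarrow>
  face f (Suc i') xs ! k = (if k < i' then xs!k else if k = i' then f (xs!i') (xs!Suc i') else if k = Suc i' then f (xs!Suc i') (xs!Suc (Suc i')) else xs!Suc k)"
  using face_nthi[of xs "Suc (Suc q)" k "Suc i'" f] by simp

lemma simp_id':
  assumes AS: "assoc_shelf f" and L: "length xs = Suc (Suc (Suc (Suc p)))" and ji: "j < i" and im: "i \<le> Suc (Suc (Suc p))"
  shows "face f j (face f i xs) = face f (i-1) (face f j xs)"
proof -
  have L1: "length (face f i xs) = Suc (Suc (Suc p))" using face_len[OF L _ im] by simp
  have L2: "length (face f j xs) = Suc (Suc (Suc p))" using face_len[OF L, of j] ji im by simp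
  note KK = K[OF AS]
  show ?thesis
  proof (rule nth_equalityI)
    show "length (face f j (face f i xs)) = length (face f (i - 1) (face f j xs))"
      using face_len[OF L1, of j] face_len[OF L2, of "i-1"] ji im by simp
  next
    fix k assume "k < length (face f j (face f i xs))"
    then have k: "k < Suc (Suc p)" using face_len[OF L1, of j] ji im by simp
    consider (A) "i = Suc (Suc (Suc p))" "j = 0" | (B1) "i = Suc (Suc (Suc p))" "j = Suc (Suc p)"
      | (B2) j' where "i = Suc (Suc (Suc p))" "j = Suc j'" "j' < Suc p"
      | (C1) "i = Suc 0" "j = 0" | (C2) i' where "i = Suc (Suc i')" "i' < Suc p" "j = 0"
      | (D) i' j' where "i = Suc (Suc i')" "i' < Suc p" "j = Suc j'" "j' \<le> i'"
    proof -
      obtain i0 where i0: "i = Suc i0" using ji by (cases i) auto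
      show thesis
      proof (cases "i0 = Suc (Suc p)")
        case True
        show thesis
        proof (cases j)
          case 0 then show thesis using that(1) True i0 by simp
        next
          case (Suc j')
          show thesis
          proof (cases "j' = Suc p")
            case True then show thesis using that(2) \<open>i0 = Suc (Suc p)\<close> i0 Suc by simp
          next
            case False then show thesis using that(3)[of j'] \<open>i0 = Suc (Suc p)\<close> i0 Suc ji by simp
          qed
        qed
      next
        case False
        then have i0p: "i0 < Suc (Suc p)" using im i0 by simp
        show thesis
        proof (cases i0)
          case 0 then show thesis using that(4) i0 ji by simp
        next
          case (Suc i')
          show thesis
          proof (cases j)
            case 0 then show thesis using that(5)[of i'] i0 Suc i0p by simp
          next
            case (Suc j') then show thesis using that(6)[of i' j'] i0 \<open>i0 = Suc i'\<close> i0p ji by simp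
          qed
        qed
      qed
    qed
    then show "face f j (face f i xs) ! k = face f (i - 1) (face f j xs) ! k"
    proof cases
      case A
      show ?thesis using L1 L2 k A
        by (simp add: n0 nm L KK)
    next
      case B1
      show ?thesis using L1 L2 k B1
        by (simp add: ni nm L KK)
    next
      case (B2 j')
      show ?thesis using L1 L2 k B2
        by (simp add: ni nm L KK)
    next
      case C1
      show ?thesis using L1 L2 k C1
        by (simp add: n0 ni L KK)
    next
      case (C2 i')
      show ?thesis using L1 L2 k C2
        by (simp add: n0 ni L KK)
    next
      case (D i' j')
      show ?thesis using L1 L2 k D
        by (simp add: ni L KK)
    qed
  qed
qed

lemma simp_id:
  assumes AS: "assoc_shelf f" and L: "length xs = Suc m" and m: "3 \<le> m" and ji: "j < i" and im: "i \<le> m"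
  shows "face f j (face f i xs) = face f (i-1) (face f j xs)"
proof -
  obtain p where n: "m = Suc (Suc (Suc p))"
  proof
    show "m = Suc (Suc (Suc (m - 3)))" using m by simp
  qed
  show ?thesis using simp_id'[OF AS _ ji, of xs p] L im n by simp
qed

lemma f3: "face f 0 [a,b,c] = [f a b, f c a]" "face f 1 [a,b,c] = [f a b, f b c]" "face f 2 [a,b,c] = [f c a, f b c]"
  by (simp_all add: face_def)

lemma f2: "face f 0 [p,q] = [f (f p q) p]" "face f 1 [p,q] = [f (f q p) q]"
  by (simp_all add: face_def)

lemma simp_id2:
  assumes AS: "assoc_shelf f" and L: "length xs = 3" and ji: "j < i" and im: "i \<le> 2"
  shows "face f j (face f i xs) = face f (i-1) (face f j xs)"
proof -
  have "\<exists>a b c. xs = [a,b,c]" using L by (auto simp: numeral_3_eq_3 length_Suc_conv)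
  then obtain a b c where xs: "xs = [a,b,c]" by blast
  have "(i = 1 \<and> j = 0) \<or> (i = 2 \<and> j = 0) \<or> (i = 2 \<and> j = 1)" using ji im by auto
  moreover have "face f 0 (face f 1 xs) = face f 0 (face f 0 xs)"
    by (simp only: xs f3 f2) (simp add: K[OF AS])
  moreover have "face f 0 (face f 2 xs) = face f 1 (face f 0 xs)"
    by (simp only: xs f3 f2) (simp add: K[OF AS])
  moreover have "face f 1 (face f 2 xs) = face f 1 (face f 1 xs)"
    by (simp only: xs f3 f2) (simp add: K[OF AS])
  ultimately show ?thesis by auto
qed

lemma simp_id_all:
  assumes AS: "assoc_shelf f" and L: "length xs = Suc m" and m: "2 \<le> m" and ji: "j < i" and im: "i \<le> m"
  shows "face f j (face f i xs) = face f (i-1) (face f j xs)"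
proof (cases "m = 2")
  case True then show ?thesis using simp_id2[OF AS _ ji] L im by simp
next
  case False then show ?thesis using simp_id[OF AS L _ ji im] m by simp
qed

lemma cancel:
  fixes G :: "nat \<times> nat \<Rightarrow> 'b::ab_group_add"
  assumes "\<And>i j. j < i \<Longrightarrow> i \<le> m \<Longrightarrow> G (j, i-1) = - G (i,j)"
  shows "(\<Sum>p\<in>{0..m}\<times>{0..<m}. G p) = 0"
proof -
  define A where "A = {(i,j). j < i \<and> i \<le> m}"
  define B where "B = {(i,j). i \<le> j \<and> j < m}"
  define \<phi> where "\<phi> = (\<lambda>(i::nat,j::nat). (j, i - 1))"
  have fA: "finite A" unfolding A_def
    by (rule finite_subset[of _ "{0..m}\<times>{0..m}"]) auto
  have fB: "finite B" unfolding B_def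
    by (rule finite_subset[of _ "{0..m}\<times>{0..m}"]) auto
  have U: "{0..m}\<times>{0..<m} = A \<union> B" unfolding A_def B_def by auto
  have D: "A \<inter> B = {}" unfolding A_def B_def by auto
  have inj: "inj_on \<phi> A" unfolding inj_on_def A_def \<phi>_def by auto
  have img: "\<phi> ` A = B"
  proof
    show "\<phi> ` A \<subseteq> B" unfolding A_def B_def \<phi>_def by auto
    show "B \<subseteq> \<phi> ` A"
    proof
      fix p assume "p \<in> B"
      then obtain i j where p: "p = (i,j)" "i \<le> j" "j < m" unfolding B_def by auto
      then have "(j+1, i) \<in> A" "\<phi> (j+1, i) = p" unfolding A_def \<phi>_def by auto
      then show "p \<in> \<phi> ` A" by (metis image_eqI)
    qed
  qed
  have "sum G B = sum (G \<circ> \<phi>) A" using sum.reindex[OF inj, of G] img by simp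
  also have "\<dots> = sum (\<lambda>p. - G p) A"
  proof (rule sum.cong[OF refl])
    fix p assume "p \<in> A"
    then obtain i j where "p = (i,j)" "j < i" "i \<le> m" unfolding A_def by auto
    then show "(G \<circ> \<phi>) p = - G p" using assms[of j i] by (simp add: \<phi>_def)
  qed
  also have "\<dots> = - sum G A" by (simp add: sum_negf)
  finally have "sum G B = - sum G A" .
  then show ?thesis using U D fA fB by (simp add: sum.union_disjoint)
qed

lemma bd_eq: "bd f c = frag_extend (bd_basis f) c"
  unfolding bd_def frag_extend_def
proof (rule sum.cong[OF refl])
  fix xs
  show "Poly_Mapping.map (\<lambda>k. Poly_Mapping.lookup c xs * k) (bd_basis f xs) =
        frag_cmul (Poly_Mapping.lookup c xs) (bd_basis f xs)"
    by (rule poly_mapping_eqI) (simp add: Poly_Mapping.map.rep_eq when_def)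
qed

lemma frag_extend_single: "c \<noteq> 0 \<Longrightarrow> frag_extend B (Poly_Mapping.single x c) = frag_cmul c (B x)"
  by (simp add: frag_extend_def)

lemma frag_cmul_single: "frag_cmul a (Poly_Mapping.single x c) = Poly_Mapping.single x (a * c)"
  by (rule poly_mapping_eqI) (simp add: lookup_single when_def)

lemma basis_case:
  assumes AS: "assoc_shelf f" and L: "length xs = Suc (Suc n)"
  shows "frag_extend (bd_basis f) (bd_basis f xs) = 0"
proof -
  have bb: "bd_basis f xs = (\<Sum>i\<in>{0..Suc n}. Poly_Mapping.single (face f i xs) ((-1) ^ i))"
    using L by (simp add: bd_basis_def)
  have "frag_extend (bd_basis f) (bd_basis f xs) =
        (\<Sum>i\<in>{0..Suc n}. frag_cmul ((-1) ^ i) (bd_basis f (face f i xs)))"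
    unfolding bb frag_extend_sum[OF finite_atLeastAtMost] o_def
    by (rule sum.cong[OF refl]) (simp add: frag_extend_single)
  also have "\<dots> = 0"
  proof (cases n)
    case 0
    then have "bd_basis f (face f i xs) = 0" for i using face_len1[of xs f i] L
      by (simp add: bd_basis_def)
    then show ?thesis by simp
  next
    case (Suc n')
    have m2: "2 \<le> Suc n" using Suc by simp
    have inner: "bd_basis f (face f i xs) = (\<Sum>j\<in>{0..<Suc n}. Poly_Mapping.single (face f j (face f i xs)) ((-1) ^ j))"
      if "i \<in> {0..Suc n}" for i
    proof -
      have "length (face f i xs) = Suc n" using face_len[OF L m2] that by simp
      then show ?thesis using Suc by (simp add: bd_basis_def atLeastLessThanSuc_atLeastAtMost)
    qed
    have "(\<Sum>i\<in>{0..Suc n}. frag_cmul ((-1) ^ i) (bd_basis f (face f i xs)))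
        = (\<Sum>i\<in>{0..Suc n}. \<Sum>j\<in>{0..<Suc n}. Poly_Mapping.single (face f j (face f i xs)) ((-1) ^ (i+j)))"
      by (rule sum.cong[OF refl]) (simp only: inner frag_cmul_sum frag_cmul_single power_add)
    also have "\<dots> = (\<Sum>p\<in>{0..Suc n}\<times>{0..<Suc n}. (\<lambda>(i,j). Poly_Mapping.single (face f j (face f i xs)) ((-1) ^ (i+j))) p)"
      by (rule sum.cartesian_product)
    also have "\<dots> = 0"
    proof (rule cancel)
      fix i j assume ji: "j < i" "i \<le> Suc n"
      have e: "face f (i-1) (face f j xs) = face f j (face f i xs)"
        using simp_id_all[OF AS L m2 ji] by simp
      have s: "((-1::int) ^ (j + (i-1))) = - ((-1) ^ (i+j))"
      proof -
        have ij: "i + j = Suc (j + (i-1))" using ji by simp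
        have "(-1::int) ^ (i+j) = - ((-1) ^ (j + (i-1)))" unfolding ij by simp
        then show ?thesis by simp
      qed
      show "(\<lambda>(i,j). Poly_Mapping.single (face f j (face f i xs)) ((-1::int) ^ (i+j))) (j, i-1) =
            - (\<lambda>(i,j). Poly_Mapping.single (face f j (face f i xs)) ((-1) ^ (i+j))) (i, j)"
        using e s by (simp add: single_uminus)
    qed
    finally show ?thesis .
  qed
  finally show ?thesis .
qed

theorem theorem1p4:
  fixes f :: "'a \<Rightarrow> 'a \<Rightarrow> 'a"
  assumes "assoc_shelf f"
  shows "\<forall>n. \<forall>c\<in>chains (Suc n). bd f (bd f c) = 0"
proof (intro allI ballI)
  fix n and c :: "'a list \<Rightarrow>\<^sub>0 int"
  assume "c \<in> chains (Suc n)"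
  then have "Poly_Mapping.keys c \<subseteq> {xs. length xs = Suc (Suc n)}" by (auto simp: chains_def)
  then have "frag_extend (bd_basis f) (frag_extend (bd_basis f) c) = 0"
  proof (induction c rule: frag_induction)
    case zero then show ?case by simp
  next
    case (one x) then show ?case using basis_case[OF assms] by simp
  next
    case (diff a b) then show ?case by (simp add: frag_extend_diff)
  qed
  then show "bd f (bd f c) = 0" by (simp add: bd_eq)
qed

end
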